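(* Let $\mathcal{P}\subset\mathbb{R}^d$ be a polytope (cage) with vertices $v_1,\dots,v_K$. For $x\in\mathcal{P}$ let $\widehat{\mathbb{T}}_x$ be the set of non-degenerate simplices $T$ whose vertices are cage vertices of $\mathcal{P}$, which contain $x$, and which contain no cage vertex other than their own vertices (i.e. for every $v\in\{v_1,\dots,v_K\}$, $v\in T$ implies $v$ is a vertex of $T$). Suppose that for every $x\in\mathcal{P}$, $\mathcal{N}(x)=(\mathcal{N}_T(x))_{T\in\widehat{\mathbb{T}}_x}$ is a vector of non-negative numbers summing to one, and define $$\alpha(x;\mathcal{P})=\sum_{T\in\widehat{\mathbb{T}}_x}\mathcal{N}_T(x)\,\alpha(x;\mathcal{P},T).$$ Then $\alpha(\cdot;\mathcal{P})$ is a valid generalized barycentric coordinate function: for all $x\in\mathcal{P}$ and all $i,j$, $\alpha_i(x;\mathcal{P})\ge 0$, $\sum_i\alpha_i(x;\mathcal{P})=1$, $\sum_i\alpha_i(x;\mathcal{P})\,v_i=x$, and $\alpha_i(v_j;\mathcal{P})=\delta_{ij}$.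
   Context: For a non-degenerate (nonzero volume) simplex $T$ in $\mathbb{R}^d$ with vertex set $\{v_{l_0},\dots,v_{l_d}\}\subseteq\{v_1,\dots,v_K\}$ containing $x$, the simplex barycentric coordinates are the unique $\lambda\in\mathbb{R}^{d+1}$ with $\sum_k\lambda_k v_{l_k}=x$ and $\sum_k\lambda_k=1$; the cage coordinates due to $T$, $\alpha(x;\mathcal{P},T)\in\mathbb{R}^K$, have entry $i$ equal to the simplex coordinate of $x$ associated with $v_i$ if $v_i$ is a vertex of $T$, and $0$ otherwise. $\delta_{ij}$ is the Kronecker delta. *)

theory Defs
  imports "HOL-Analysis.Analysis"
begin

text \<open>Cage vertices are v 0, ..., v (K-1) (0-based indexing).
  A simplex with cage vertices is given by the index set S of its vertices.\<close>

definition nondeg_simplex :: "(nat \<Rightarrow> 'a::euclidean_space) \<Rightarrow> nat set \<Rightarrow> bool" where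
  "nondeg_simplex v S \<longleftrightarrow> card (v ` S) = DIM('a) + 1 \<and> \<not> affine_dependent (v ` S)"

definition cage_coords :: "(nat \<Rightarrow> 'a::euclidean_space) \<Rightarrow> nat set \<Rightarrow> 'a \<Rightarrow> nat \<Rightarrow> real" where
  "cage_coords v S x =
     (THE l. (\<forall>k. k \<notin> S \<longrightarrow> l k = 0) \<and> sum l S = 1 \<and> (\<Sum>k\<in>S. l k *\<^sub>R v k) = x)"

definition admissible_simplices :: "(nat \<Rightarrow> 'a::euclidean_space) \<Rightarrow> nat \<Rightarrow> 'a \<Rightarrow> nat set set" where
  "admissible_simplices v K x =
     {S. S \<subseteq> {..<K} \<and> nondeg_simplex v S \<and> x \<in> convex hull (v ` S) \<and>
         (\<forall>j<K. v j \<in> convex hull (v ` S) \<longrightarrow> j \<in> S)}"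

definition cage_gbc ::
  "(nat \<Rightarrow> 'a::euclidean_space) \<Rightarrow> nat \<Rightarrow> ('a \<Rightarrow> nat set \<Rightarrow> real) \<Rightarrow> 'a \<Rightarrow> nat \<Rightarrow> real" where
  "cage_gbc v K N x i = (\<Sum>S\<in>admissible_simplices v K x. N x S * cage_coords v S x i)"

end

theory Submission
  imports Defs
begin

lemma coords_unique:
  fixes v :: "nat \<Rightarrow> 'a::euclidean_space"
  assumes fin: "finite S" and inj: "inj_on v S" and ind: "\<not> affine_dependent (v ` S)"
    and l1: "\<forall>k. k \<notin> S \<longrightarrow> l k = 0" "sum l S = 1" "(\<Sum>k\<in>S. l k *\<^sub>R v k) = x"
    and l2: "\<forall>k. k \<notin> S \<longrightarrow> m k = 0" "sum m S = 1" "(\<Sum>k\<in>S. m k *\<^sub>R v k) = x"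
  shows "l = m"
proof -
  define U where "U = (\<lambda>y. l (inv_into S v y) - m (inv_into S v y))"
  have UV: "U (v k) = l k - m k" if "k \<in> S" for k
    using inj that by (simp add: U_def)
  have "sum U (v ` S) = sum (\<lambda>k. l k - m k) S"
    by (simp add: sum.reindex[OF inj] UV)
  also have "\<dots> = 0" using l1 l2 by (simp add: sum_subtractf)
  finally have s0: "sum U (v ` S) = 0" .
  have "(\<Sum>y\<in>v ` S. U y *\<^sub>R y) = (\<Sum>k\<in>S. (l k - m k) *\<^sub>R v k)"
    by (simp add: sum.reindex[OF inj] UV)
  also have "\<dots> = 0" using l1 l2 by (simp add: scaleR_diff_left sum_subtractf)
  finally have s1: "(\<Sum>y\<in>v ` S. U y *\<^sub>R y) = 0" .
  have "\<forall>y\<in>v ` S. U y = 0"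
    using ind affine_dependent_explicit_finite[of "v ` S"] fin s0 s1 by auto
  then have "\<forall>k\<in>S. l k = m k" using UV by fastforce
  then show ?thesis using l1 l2 by (metis ext)
qed

lemma coords_char:
  fixes v :: "nat \<Rightarrow> 'a::euclidean_space"
  assumes fin: "finite S" and inj: "inj_on v S" and ind: "\<not> affine_dependent (v ` S)"
    and l1: "\<forall>k. k \<notin> S \<longrightarrow> l k = 0" "sum l S = 1" "(\<Sum>k\<in>S. l k *\<^sub>R v k) = x"
  shows "cage_coords v S x = l"
  unfolding cage_coords_def
  apply (rule the_equality)
  using l1 apply blast
  using coords_unique[OF fin inj ind] l1 by metis

lemma coords_hull:
  fixes v :: "nat \<Rightarrow> 'a::euclidean_space"
  assumes fin: "finite S" and inj: "inj_on v S" and ind: "\<not> affine_dependent (v ` S)"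
    and x: "x \<in> convex hull (v ` S)"
  shows "(\<forall>k. cage_coords v S x k \<ge> 0) \<and> (\<forall>k. k \<notin> S \<longrightarrow> cage_coords v S x k = 0)
     \<and> sum (cage_coords v S x) S = 1 \<and> (\<Sum>k\<in>S. cage_coords v S x k *\<^sub>R v k) = x"
proof -
  obtain u where u: "\<forall>y\<in>v ` S. 0 \<le> u y" "sum u (v ` S) = 1" "(\<Sum>y\<in>v ` S. u y *\<^sub>R y) = x"
    using x convex_hull_finite[of "v ` S"] fin by auto
  define l where "l = (\<lambda>k. if k \<in> S then u (v k) else 0)"
  have a: "\<forall>k. k \<notin> S \<longrightarrow> l k = 0" by (simp add: l_def)
  have b: "sum l S = 1" using u(2) by (simp add: l_def sum.reindex[OF inj])
  have c: "(\<Sum>k\<in>S. l k *\<^sub>R v k) = x" using u(3) by (simp add: l_def sum.reindex[OF inj])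
  have d: "\<forall>k. l k \<ge> 0" using u(1) by (simp add: l_def)
  have "cage_coords v S x = l" using coords_char[OF fin inj ind a b c] .
  then show ?thesis using a b c d by simp
qed

theorem proposition2:
  fixes v :: "nat \<Rightarrow> 'a::euclidean_space" and K :: nat and P :: "'a set"
    and N :: "'a \<Rightarrow> nat set \<Rightarrow> real"
  assumes inj: "inj_on v {..<K}"
    and P_def: "P = convex hull (v ` {..<K})"
    and vert: "\<And>i. i < K \<Longrightarrow> v i extreme_point_of P"
    and N_nonneg: "\<And>x S. x \<in> P \<Longrightarrow> S \<in> admissible_simplices v K x \<Longrightarrow> N x S \<ge> 0"
    and N_sum: "\<And>x. x \<in> P \<Longrightarrow> (\<Sum>S\<in>admissible_simplices v K x. N x S) = 1"
  shows "(\<forall>x\<in>P. \<forall>i<K. cage_gbc v K N x i \<ge> 0)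
       \<and> (\<forall>x\<in>P. (\<Sum>i<K. cage_gbc v K N x i) = 1)
       \<and> (\<forall>x\<in>P. (\<Sum>i<K. cage_gbc v K N x i *\<^sub>R v i) = x)
       \<and> (\<forall>i<K. \<forall>j<K. cage_gbc v K N (v j) i = (if i = j then 1 else 0))"
proof -
  have finA: "finite (admissible_simplices v K x)" for x
    by (rule finite_subset[of _ "Pow {..<K}"]) (auto simp: admissible_simplices_def)
  have props: "S \<subseteq> {..<K} \<and> finite S \<and> inj_on v S \<and> \<not> affine_dependent (v ` S)
      \<and> x \<in> convex hull (v ` S) \<and> (\<forall>j<K. v j \<in> convex hull (v ` S) \<longrightarrow> j \<in> S)"
    if "S \<in> admissible_simplices v K x" for S x
    using that inj by (auto simp: admissible_simplices_def nondeg_simplex_def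
        intro: finite_subset inj_on_subset)
  have C: "(\<forall>k. cage_coords v S x k \<ge> 0) \<and> (\<forall>k. k \<notin> S \<longrightarrow> cage_coords v S x k = 0)
     \<and> sum (cage_coords v S x) S = 1 \<and> (\<Sum>k\<in>S. cage_coords v S x k *\<^sub>R v k) = x"
    if "S \<in> admissible_simplices v K x" for S x
    using props[OF that] coords_hull by blast
  have sumK: "sum (cage_coords v S x) {..<K} = 1"
    "(\<Sum>k<K. cage_coords v S x k *\<^sub>R v k) = x"
    if "S \<in> admissible_simplices v K x" for S x
  proof -
    have sub: "S \<subseteq> {..<K}" using props[OF that] by blast
    show "sum (cage_coords v S x) {..<K} = 1"
      using sum.mono_neutral_left[OF _ sub, of "cage_coords v S x"] C[OF that] by auto
    show "(\<Sum>k<K. cage_coords v S x k *\<^sub>R v k) = x"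
      using sum.mono_neutral_left[OF _ sub, of "\<lambda>k. cage_coords v S x k *\<^sub>R v k"] C[OF that] by auto
  qed
  have p1: "\<forall>x\<in>P. \<forall>i<K. cage_gbc v K N x i \<ge> 0"
    unfolding cage_gbc_def using N_nonneg C by (auto intro!: sum_nonneg)
  have p2: "\<forall>x\<in>P. (\<Sum>i<K. cage_gbc v K N x i) = 1"
  proof
    fix x assume x: "x \<in> P"
    have "(\<Sum>i<K. cage_gbc v K N x i)
        = (\<Sum>S\<in>admissible_simplices v K x. N x S * sum (cage_coords v S x) {..<K})"
      unfolding cage_gbc_def by (simp add: sum.swap[of _ "{..<K}"] sum_distrib_left)
    also have "\<dots> = (\<Sum>S\<in>admissible_simplices v K x. N x S)"
      using sumK by simp
    finally show "(\<Sum>i<K. cage_gbc v K N x i) = 1" using N_sum x by simp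
  qed
  have p3: "\<forall>x\<in>P. (\<Sum>i<K. cage_gbc v K N x i *\<^sub>R v i) = x"
  proof
    fix x assume x: "x \<in> P"
    have "(\<Sum>i<K. cage_gbc v K N x i *\<^sub>R v i)
        = (\<Sum>S\<in>admissible_simplices v K x. N x S *\<^sub>R (\<Sum>k<K. cage_coords v S x k *\<^sub>R v k))"
      unfolding cage_gbc_def
      by (simp add: scaleR_sum_left scaleR_sum_right sum.swap[of _ "{..<K}"])
    also have "\<dots> = (\<Sum>S\<in>admissible_simplices v K x. N x S) *\<^sub>R x"
      using sumK by (simp add: scaleR_sum_left)
    finally show "(\<Sum>i<K. cage_gbc v K N x i *\<^sub>R v i) = x" using N_sum x by simp
  qed
  have p4: "\<forall>i<K. \<forall>j<K. cage_gbc v K N (v j) i = (if i = j then 1 else 0)"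
  proof (intro allI impI)
    fix i j assume i: "i < K" and j: "j < K"
    have vjP: "v j \<in> P" using P_def j by (simp add: hull_inc)
    have cc: "cage_coords v S (v j) i = (if i = j then 1 else 0)"
      if S: "S \<in> admissible_simplices v K (v j)" for S
    proof -
      note pr = props[OF S]
      have jS: "j \<in> S" using pr j by blast
      have "cage_coords v S (v j) = (\<lambda>k. if k = j then 1 else 0)"
        apply (rule coords_char)
        using pr jS by (auto simp: sum.delta' if_distrib[of "\<lambda>c. c *\<^sub>R _"] cong: if_cong)
      then show ?thesis by auto
    qed
    have "cage_gbc v K N (v j) i
        = (\<Sum>S\<in>admissible_simplices v K (v j). N (v j) S) * (if i = j then 1 else 0)"
      unfolding cage_gbc_def using cc by (simp add: sum_distrib_right)
    then show "cage_gbc v K N (v j) i = (if i = j then 1 else 0)"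
      using N_sum[OF vjP] by simp
  qed
  show ?thesis using p1 p2 p3 p4 by blast
qed

end
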